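(* Let $\mathcal H_C$ be a finite-dimensional Hilbert space and let $\{\sigma^{(\mathrm{target})}_{b|x}\}_{b,x\in\{0,1\}}$ be any bipartite assemblage on $\mathcal H_C$. Define the tripartite family $$\sigma^{(\mathrm{initial})}_{a,b|x,y}:=\tfrac12\,\sigma^{(\mathrm{target})}_{b|x\oplus a\oplus y},\qquad a,b,x,y\in\{0,1\}.$$ Likewise, let $P^{(\mathrm{target})}(b,c|x,z)$, with $b,x\in\{0,1\}$ and $c,z$ ranging over finite sets, be any bipartite Bell behavior, and define $$P^{(\mathrm{initial})}(a,b,c|x,y,z):=\tfrac12\,P^{(\mathrm{target})}(b,c|x\oplus a\oplus y,z).$$ Then: (i) applying the wiring $y=a$ yields the targets: $\sum_{a}\sigma^{(\mathrm{initial})}_{a,b|x,a}=\sigma^{(\mathrm{target})}_{b|x}$ and $\sum_a P^{(\mathrm{initial})}(a,b,c|x,a,z)=P^{(\mathrm{target})}(b,c|x,z)$ for all $b,c,x,z$; (ii) $\sigma^{(\mathrm{initial})}$ admits a local hidden-state (LHS) model across the bipartition $AB|C$, and $P^{(\mathrm{initial})}$ admits a local hidden-variable (LHV) model across the bipartition $AB|C$, for every choice of target.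
   Context: $\oplus$ denotes addition modulo 2. A bipartite assemblage $\{\sigma_{b|x}\}$ on $\mathcal H_C$ is a family of positive semidefinite operators on $\mathcal H_C$ such that $\sum_b\sigma_{b|x}$ is a density operator (trace one) independent of $x$. A bipartite Bell behavior $P(b,c|x,z)$ is a family of conditional probability distributions of outputs $(b,c)$ given inputs $(x,z)$ that is non-signaling: $\sum_c P(b,c|x,z)$ is independent of $z$ and $\sum_b P(b,c|x,z)$ is independent of $x$. A tripartite family $\{\sigma_{a,b|x,y}\}$ of positive semidefinite operators on $\mathcal H_C$ admits an LHS model across $AB|C$ if there exist a finite set of values $\lambda$, probabilities $P_\lambda\ge0$ summing to one, conditional probability distributions $P_{a,b|x,y,\lambda}$ (arbitrary, i.e. not required to be non-signaling between $a$ and $b$), and density operators $\varrho_\lambda$ on $\mathcal H_C$ such that $\sigma_{a,b|x,y}=\sum_\lambda P_\lambda P_{a,b|x,y,\lambda}\varrho_\lambda$ for all $a,b,x,y$. A tripartite distribution $P(a,b,c|x,y,z)$ admits an LHV model across $AB|C$ if there exist a finite set of $\lambda$, probabilities $P_\lambda$, arbitrary conditional distributions $P(a,b|x,y,\lambda)$ and conditional distributions $P(c|z,\lambda)$ with $P(a,b,c|x,y,z)=\sum_\lambda P_\lambda P(a,b|x,y,\lambda)P(c|z,\lambda)$. *)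

theory Defs
  imports Complex_Main "HOL-Library.Function_Algebras"
begin

type_synonym 'n op = "'n \<Rightarrow> 'n \<Rightarrow> complex"

definition op_scale :: "complex \<Rightarrow> 'n op \<Rightarrow> 'n op" where
  "op_scale c M = (\<lambda>i j. c * M i j)"

definition op_trace :: "('n::finite) op \<Rightarrow> complex" where
  "op_trace M = (\<Sum>i\<in>UNIV. M i i)"

definition psd :: "('n::finite) op \<Rightarrow> bool" where
  "psd M \<longleftrightarrow> (\<forall>v::'n \<Rightarrow> complex.
      Im (\<Sum>i\<in>UNIV. \<Sum>j\<in>UNIV. cnj (v i) * M i j * v j) = 0 \<and>
      Re (\<Sum>i\<in>UNIV. \<Sum>j\<in>UNIV. cnj (v i) * M i j * v j) \<ge> 0)"

definition density :: "('n::finite) op \<Rightarrow> bool" where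
  "density M \<longleftrightarrow> psd M \<and> op_trace M = 1"

text \<open>Addition modulo 2 on bits, bits represented as bool (False = 0, True = 1).\<close>
definition xor2 :: "bool \<Rightarrow> bool \<Rightarrow> bool" (infixl "\<oplus>\<^sub>2" 65) where
  "p \<oplus>\<^sub>2 q \<longleftrightarrow> p \<noteq> q"

definition assemblage :: "(bool \<Rightarrow> bool \<Rightarrow> ('n::finite) op) \<Rightarrow> bool" where
  "assemblage \<sigma> \<longleftrightarrow> (\<forall>b x. psd (\<sigma> b x)) \<and>
     (\<forall>x. density (\<Sum>b\<in>UNIV. \<sigma> b x)) \<and>
     (\<forall>x x'. (\<Sum>b\<in>UNIV. \<sigma> b x) = (\<Sum>b\<in>UNIV. \<sigma> b x'))"

definition bell_behavior :: "(bool \<Rightarrow> 'c::finite \<Rightarrow> bool \<Rightarrow> 'z::finite \<Rightarrow> real) \<Rightarrow> bool" where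
  "bell_behavior P \<longleftrightarrow> (\<forall>b c x z. P b c x z \<ge> 0) \<and>
     (\<forall>x z. (\<Sum>b\<in>UNIV. \<Sum>c\<in>UNIV. P b c x z) = 1) \<and>
     (\<forall>b x z z'. (\<Sum>c\<in>UNIV. P b c x z) = (\<Sum>c\<in>UNIV. P b c x z')) \<and>
     (\<forall>c x x' z. (\<Sum>b\<in>UNIV. P b c x z) = (\<Sum>b\<in>UNIV. P b c x' z))"

definition initial_assemblage ::
  "(bool \<Rightarrow> bool \<Rightarrow> 'n op) \<Rightarrow> bool \<Rightarrow> bool \<Rightarrow> bool \<Rightarrow> bool \<Rightarrow> 'n op" where
  "initial_assemblage \<sigma> a b x y = op_scale (1/2) (\<sigma> b (x \<oplus>\<^sub>2 a \<oplus>\<^sub>2 y))"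

definition initial_behavior ::
  "(bool \<Rightarrow> 'c \<Rightarrow> bool \<Rightarrow> 'z \<Rightarrow> real) \<Rightarrow> bool \<Rightarrow> bool \<Rightarrow> 'c \<Rightarrow> bool \<Rightarrow> bool \<Rightarrow> 'z \<Rightarrow> real" where
  "initial_behavior P a b c x y z = (1/2) * P b c (x \<oplus>\<^sub>2 a \<oplus>\<^sub>2 y) z"

definition has_LHS_AB_C :: "(bool \<Rightarrow> bool \<Rightarrow> bool \<Rightarrow> bool \<Rightarrow> ('n::finite) op) \<Rightarrow> bool" where
  "has_LHS_AB_C \<sigma> \<longleftrightarrow> (\<exists>(L::nat set) (p::nat \<Rightarrow> real)
        (Pab::nat \<Rightarrow> bool \<Rightarrow> bool \<Rightarrow> bool \<Rightarrow> bool \<Rightarrow> real) (\<rho>::nat \<Rightarrow> 'n op).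
      finite L \<and> (\<forall>l\<in>L. p l \<ge> 0) \<and> (\<Sum>l\<in>L. p l) = 1 \<and>
      (\<forall>l\<in>L. \<forall>a b x y. Pab l a b x y \<ge> 0) \<and>
      (\<forall>l\<in>L. \<forall>x y. (\<Sum>a\<in>UNIV. \<Sum>b\<in>UNIV. Pab l a b x y) = 1) \<and>
      (\<forall>l\<in>L. density (\<rho> l)) \<and>
      (\<forall>a b x y. \<sigma> a b x y =
          (\<Sum>l\<in>L. op_scale (complex_of_real (p l * Pab l a b x y)) (\<rho> l))))"

definition has_LHV_AB_C ::
  "(bool \<Rightarrow> bool \<Rightarrow> 'c::finite \<Rightarrow> bool \<Rightarrow> bool \<Rightarrow> 'z::finite \<Rightarrow> real) \<Rightarrow> bool" where
  "has_LHV_AB_C P \<longleftrightarrow> (\<exists>(L::nat set) (p::nat \<Rightarrow> real)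
        (Pab::nat \<Rightarrow> bool \<Rightarrow> bool \<Rightarrow> bool \<Rightarrow> bool \<Rightarrow> real) (Pc::nat \<Rightarrow> 'c \<Rightarrow> 'z \<Rightarrow> real).
      finite L \<and> (\<forall>l\<in>L. p l \<ge> 0) \<and> (\<Sum>l\<in>L. p l) = 1 \<and>
      (\<forall>l\<in>L. \<forall>a b x y. Pab l a b x y \<ge> 0) \<and>
      (\<forall>l\<in>L. \<forall>x y. (\<Sum>a\<in>UNIV. \<Sum>b\<in>UNIV. Pab l a b x y) = 1) \<and>
      (\<forall>l\<in>L. \<forall>c z. Pc l c z \<ge> 0) \<and>
      (\<forall>l\<in>L. \<forall>z. (\<Sum>c\<in>UNIV. Pc l c z) = 1) \<and>
      (\<forall>a b c x y z. P a b c x y z = (\<Sum>l\<in>L. p l * Pab l a b x y * Pc l c z)))"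

end

theory Submission
  imports Defs
begin

definition qf :: "('n::finite) op \<Rightarrow> ('n \<Rightarrow> complex) \<Rightarrow> complex" where
  "qf M v = (\<Sum>i\<in>UNIV. \<Sum>j\<in>UNIV. cnj (v i) * M i j * v j)"

lemma cnj_if: "cnj (if P then a else b) = (if P then cnj a else cnj b)" by simp
lemma if0_mult: "(if P then a else 0) * (x::complex) = (if P then a*x else 0)" by simp
lemma mult_if0: "(x::complex) * (if P then a else 0) = (if P then x*a else 0)" by simp

lemma qf_one: "qf M (\<lambda>k. if k = i then 1 else 0) = M i i"
  unfolding qf_def by (simp only: cnj_if complex_cnj_zero complex_cnj_one if0_mult mult_if0) simp

lemma qf_two: assumes "i \<noteq> j"
  shows "qf M (\<lambda>k. if k = i then 1 else if k = j then t else 0) = M i i + t * M i j + cnj t * M j i + cnj t * t * M j j"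
proof -
  have e: "(\<lambda>k. if k = i then 1 else if k = j then t else 0) = (\<lambda>k. (if k = i then 1 else 0) + (if k = j then t else 0))"
    using assms by auto
  show ?thesis unfolding qf_def e
    by (simp only: complex_cnj_add distrib_left distrib_right sum.distrib cnj_if complex_cnj_zero complex_cnj_one if0_mult mult_if0)
       (simp add: sum.distrib algebra_simps)
qed

lemma psd_qf: "psd M \<Longrightarrow> Im (qf M v) = 0 \<and> Re (qf M v) \<ge> 0"
  unfolding psd_def qf_def by blast

lemma psd_diag: "psd M \<Longrightarrow> Im (M i i) = 0 \<and> Re (M i i) \<ge> 0"
  using psd_qf[of M "\<lambda>k. if k = i then 1 else 0"] by (simp add: qf_one)

lemma psd_trace0: assumes "psd M" "op_trace M = 0" shows "M = 0"
proof -
  have d: "M i i = 0" for i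
  proof -
    have "Re (op_trace M) = (\<Sum>k\<in>UNIV. Re (M k k))" unfolding op_trace_def by (simp add: Re_sum)
    hence "(\<Sum>k\<in>UNIV. Re (M k k)) = 0" using assms by simp
    hence "Re (M i i) = 0" using psd_diag[OF assms(1)]
      by (subst (asm) sum_nonneg_eq_0_iff) auto
    thus ?thesis using psd_diag[OF assms(1), of i] by (simp add: complex_eq_iff)
  qed
  have q: "Im (t * M i j + cnj t * M j i) = 0 \<and> Re (t * M i j + cnj t * M j i) \<ge> 0" if "i \<noteq> j" for i j t
    using psd_qf[OF assms(1), of "\<lambda>k. if k = i then 1 else if k = j then t else 0"]
    by (simp add: qf_two[OF that] d)
  have z: "t * M i j + cnj t * M j i = 0" if "i \<noteq> j" for i j t
  proof -
    define w where "w = t * M i j + cnj t * M j i"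
    have neg: "(-t) * M i j + cnj (-t) * M j i = - w" unfolding w_def by simp
    have "Re w \<ge> 0" "Re (- w) \<ge> 0" "Im w = 0"
      using q[OF that, of t] q[OF that, of "-t"] unfolding neg w_def[symmetric] by auto
    hence "w = 0" by (intro complex_eqI) auto
    thus ?thesis unfolding w_def .
  qed
  have nd: "M i j = 0" if "i \<noteq> j" for i j
  proof -
    have h1: "M i j + M j i = 0" using z[OF that, of 1] by simp
    have h2: "\<i> * M i j - \<i> * M j i = 0" using z[OF that, of "\<i>"] by simp
    have "2 * \<i> * M i j = \<i> * (M i j + M j i) + (\<i> * M i j - \<i> * M j i)" by (simp add: algebra_simps)
    also have "\<dots> = 0" using h1 h2 by simp
    finally show ?thesis by simp
  qed
  show ?thesis
  proof (intro ext)
    fix i j show "M i j = 0 i j"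
    proof (cases "i = j")
      case True thus ?thesis using d[of i] by simp
    next
      case False thus ?thesis using nd[OF False] by simp
    qed
  qed
qed

lemma qf_scale: "qf (op_scale c M) v = c * qf M v"
  unfolding qf_def op_scale_def by (simp add: sum_distrib_left algebra_simps)

lemma psd_scale: "psd M \<Longrightarrow> c \<ge> 0 \<Longrightarrow> psd (op_scale (complex_of_real c) M)"
proof -
  assume a: "psd M" "c \<ge> 0"
  have "Im (qf (op_scale (complex_of_real c) M) v) = 0 \<and> Re (qf (op_scale (complex_of_real c) M) v) \<ge> 0" for v
    using psd_qf[OF a(1), of v] a(2) unfolding qf_scale by simp
  thus ?thesis unfolding psd_def qf_def by blast
qed

lemma trace_scale: "op_trace (op_scale c M) = c * op_trace M"
  unfolding op_trace_def op_scale_def by (simp add: sum_distrib_left)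

lemma trace_add: "op_trace (A + B) = op_trace A + op_trace B"
  unfolding op_trace_def by (simp add: sum.distrib)

lemma trace_real: "psd M \<Longrightarrow> op_trace M = complex_of_real (Re (op_trace M)) \<and> Re (op_trace M) \<ge> 0"
  using psd_diag[of M] unfolding op_trace_def
  by (auto simp: complex_eq_iff Im_sum Re_sum intro: sum_nonneg)

definition decb :: "nat \<Rightarrow> bool" where "decb l = (2 \<le> l)"
definition decx :: "nat \<Rightarrow> bool" where "decx l = odd l"

lemma dec_vals: "decb 0 = False" "decx 0 = False" "decb 1 = False" "decx 1 = True"
  "decb 2 = True" "decx 2 = False" "decb 3 = True" "decx 3 = True"
  by (simp_all add: decb_def decx_def)

lemma sum4: "(\<Sum>l\<in>{0,1,2,3::nat}. f l) = f 0 + f 1 + f 2 + f 3"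
  by (simp add: algebra_simps)

lemma sum_bool: "(\<Sum>b\<in>(UNIV::bool set). f b) = f False + f True"
  by (simp add: UNIV_bool)

lemma LHS_part:
  fixes \<sigma> :: "bool \<Rightarrow> bool \<Rightarrow> ('n::finite) op"
  assumes A: "assemblage \<sigma>"
  shows "has_LHS_AB_C (initial_assemblage \<sigma>)"
proof -
  have psdS: "psd (\<sigma> b x)" for b x using A unfolding assemblage_def by blast
  have dens: "density (\<Sum>b\<in>UNIV. \<sigma> b x)" for x using A unfolding assemblage_def by blast
  define tr where "tr b x = Re (op_trace (\<sigma> b x))" for b x
  define \<tau> where "\<tau> = (\<Sum>b\<in>UNIV. \<sigma> b False)"
  define L where "L = {0,1,2,3::nat}"
  define p where "p l = tr (decb l) (decx l) / 2" for l
  define \<rho> where "\<rho> l = (if tr (decb l) (decx l) = 0 then \<tau>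
      else op_scale (complex_of_real (1 / tr (decb l) (decx l))) (\<sigma> (decb l) (decx l)))" for l
  define Pab where "Pab l a b x y = (if b = decb l \<and> decx l = (x \<oplus>\<^sub>2 a \<oplus>\<^sub>2 y) then 1 else (0::real))"
    for l a b x y
  have trR: "op_trace (\<sigma> b x) = complex_of_real (tr b x)" "tr b x \<ge> 0" for b x
    using trace_real[OF psdS[of b x]] unfolding tr_def by auto
  have trsum: "tr False x + tr True x = 1" for x
  proof -
    have "op_trace (\<sigma> False x + \<sigma> True x) = 1" using dens[of x] unfolding density_def sum_bool by blast
    thus ?thesis unfolding trace_add trR by (metis of_real_add of_real_eq_1_iff)
  qed
  have K: "op_scale (complex_of_real (tr b x / 2)) (if tr b x = 0 then \<tau>
      else op_scale (complex_of_real (1 / tr b x)) (\<sigma> b x)) = op_scale (1/2) (\<sigma> b x)" for b x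
  proof (cases "tr b x = 0")
    case True
    hence "\<sigma> b x = 0" using psd_trace0[OF psdS[of b x]] trR[of b x] by simp
    thus ?thesis using True by (simp add: op_scale_def fun_eq_iff)
  next
    case False
    thus ?thesis by (simp add: op_scale_def fun_eq_iff)
  qed
  have T: "op_scale (complex_of_real (p l * Pab l a b x y)) (\<rho> l) =
     (if b = decb l \<and> decx l = (x \<oplus>\<^sub>2 a \<oplus>\<^sub>2 y) then op_scale (1/2) (\<sigma> (decb l) (decx l)) else 0)"
    for l a b x y
  proof (cases "b = decb l \<and> decx l = (x \<oplus>\<^sub>2 a \<oplus>\<^sub>2 y)")
    case True
    thus ?thesis using K[of "decb l" "decx l"] unfolding p_def Pab_def \<rho>_def by simp
  next
    case False
    hence "Pab l a b x y = 0" unfolding Pab_def by simp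
    thus ?thesis by (simp only: False if_False mult_zero_right of_real_0) (simp add: op_scale_def fun_eq_iff)
  qed
  show ?thesis unfolding has_LHS_AB_C_def
  proof (intro exI conjI)
    show "finite L" unfolding L_def by simp
    show "\<forall>l\<in>L. 0 \<le> p l" unfolding p_def using trR by simp
    show "sum p L = 1" unfolding L_def sum4 p_def dec_vals using trsum[of False] trsum[of True] by simp
    show "\<forall>l\<in>L. \<forall>a b x y. 0 \<le> Pab l a b x y" unfolding Pab_def by simp
    show "\<forall>l\<in>L. \<forall>x y. (\<Sum>a\<in>UNIV. \<Sum>b\<in>UNIV. Pab l a b x y) = 1"
      unfolding Pab_def sum_bool by (auto simp: xor2_def)
    show "\<forall>l\<in>L. density (\<rho> l)"
    proof
      fix l
      show "density (\<rho> l)"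
      proof (cases "tr (decb l) (decx l) = 0")
        case True thus ?thesis unfolding \<rho>_def \<tau>_def using dens by simp
      next
        case False
        hence pos: "tr (decb l) (decx l) > 0" using trR(2)[of "decb l" "decx l"] by simp
        have "psd (op_scale (complex_of_real (1 / tr (decb l) (decx l))) (\<sigma> (decb l) (decx l)))"
          using psd_scale[OF psdS, of "1 / tr (decb l) (decx l)"] pos by (simp del: of_real_divide)
        moreover have "op_trace (op_scale (complex_of_real (1 / tr (decb l) (decx l))) (\<sigma> (decb l) (decx l))) = 1"
          unfolding trace_scale trR using pos by (simp flip: of_real_mult)
        ultimately show ?thesis unfolding \<rho>_def density_def using False by simp
      qed
    qed
    show "\<forall>a b x y. initial_assemblage \<sigma> a b x y =
          (\<Sum>l\<in>L. op_scale (complex_of_real (p l * Pab l a b x y)) (\<rho> l))"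
      unfolding L_def sum4 T dec_vals initial_assemblage_def
      by (simp add: xor2_def) 
  qed
qed

lemma LHV_part:
  fixes P :: "bool \<Rightarrow> 'c::finite \<Rightarrow> bool \<Rightarrow> 'z::finite \<Rightarrow> real"
  assumes B: "bell_behavior P"
  shows "has_LHV_AB_C (initial_behavior P)"
proof -
  have nn: "P b c x z \<ge> 0" for b c x z using B unfolding bell_behavior_def by blast
  have norm: "(\<Sum>b\<in>UNIV. \<Sum>c\<in>UNIV. P b c x z) = 1" for x z using B unfolding bell_behavior_def by blast
  have ns: "(\<Sum>c\<in>UNIV. P b c x z) = (\<Sum>c\<in>UNIV. P b c x z')" for b x z z'
    using B unfolding bell_behavior_def by blast
  define mb where "mb b x = (\<Sum>c\<in>UNIV. P b c x undefined)" for b x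
  have mbz: "(\<Sum>c\<in>UNIV. P b c x z) = mb b x" for b x z unfolding mb_def by (rule ns)
  have mb0: "mb b x \<ge> 0" for b x unfolding mb_def by (simp add: nn sum_nonneg)
  define L where "L = {0,1,2,3::nat}"
  define p where "p l = mb (decb l) (decx l) / 2" for l
  define Pc where "Pc l c z = (if mb (decb l) (decx l) = 0 then 1 / real (card (UNIV::'c set))
      else P (decb l) c (decx l) z / mb (decb l) (decx l))" for l c z
  define Pab where "Pab l a b x y = (if b = decb l \<and> decx l = (x \<oplus>\<^sub>2 a \<oplus>\<^sub>2 y) then 1 else (0::real))"
    for l a b x y
  have msum: "mb False x + mb True x = 1" for x
    using norm[of x undefined] unfolding sum_bool mb_def .
  have K: "p l * Pc l c z = P (decb l) c (decx l) z / 2" for l c z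
  proof (cases "mb (decb l) (decx l) = 0")
    case True
    hence "(\<Sum>c\<in>UNIV. P (decb l) c (decx l) z) = 0" using mbz by simp
    hence "P (decb l) c (decx l) z = 0" using nn by (subst (asm) sum_nonneg_eq_0_iff) auto
    thus ?thesis using True unfolding p_def Pc_def by simp
  next
    case False
    thus ?thesis unfolding p_def Pc_def by simp
  qed
  have T: "p l * Pab l a b x y * Pc l c z =
     (if b = decb l \<and> decx l = (x \<oplus>\<^sub>2 a \<oplus>\<^sub>2 y) then P (decb l) c (decx l) z / 2 else 0)"
    for l a b x y c z
    using K[of l c z] unfolding Pab_def by (simp add: algebra_simps)
  show ?thesis unfolding has_LHV_AB_C_def
  proof (intro exI conjI)
    show "finite L" unfolding L_def by simp
    show "\<forall>l\<in>L. 0 \<le> p l" unfolding p_def using mb0 by simp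
    show "sum p L = 1" unfolding L_def sum4 p_def dec_vals using msum[of False] msum[of True] by simp
    show "\<forall>l\<in>L. \<forall>a b x y. 0 \<le> Pab l a b x y" unfolding Pab_def by simp
    show "\<forall>l\<in>L. \<forall>x y. (\<Sum>a\<in>UNIV. \<Sum>b\<in>UNIV. Pab l a b x y) = 1"
      unfolding Pab_def sum_bool by (auto simp: xor2_def)
    show "\<forall>l\<in>L. \<forall>c z. 0 \<le> Pc l c z" unfolding Pc_def using nn mb0 by simp
    show "\<forall>l\<in>L. \<forall>z. (\<Sum>c\<in>UNIV. Pc l c z) = 1"
    proof (intro ballI allI)
      fix l z
      show "(\<Sum>c\<in>UNIV. Pc l c z) = 1"
      proof (cases "mb (decb l) (decx l) = 0")
        case True thus ?thesis unfolding Pc_def by simp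
      next
        case False
        hence "(\<Sum>c\<in>UNIV. Pc l c z) = (\<Sum>c\<in>UNIV. P (decb l) c (decx l) z) / mb (decb l) (decx l)"
          unfolding Pc_def by (simp add: sum_divide_distrib)
        thus ?thesis using False mbz by simp
      qed
    qed
    show "\<forall>a b c x y z. initial_behavior P a b c x y z = (\<Sum>l\<in>L. p l * Pab l a b x y * Pc l c z)"
      unfolding L_def sum4 T dec_vals initial_behavior_def
      by (simp add: xor2_def)
  qed
qed

theorem theorem1:
  fixes \<sigma> :: "bool \<Rightarrow> bool \<Rightarrow> ('n::finite) op"
    and P :: "bool \<Rightarrow> 'c::finite \<Rightarrow> bool \<Rightarrow> 'z::finite \<Rightarrow> real"
  assumes "assemblage \<sigma>"
    and "bell_behavior P"
  shows "(\<forall>b x. (\<Sum>a\<in>UNIV. initial_assemblage \<sigma> a b x a) = \<sigma> b x)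
       \<and> (\<forall>b c x z. (\<Sum>a\<in>UNIV. initial_behavior P a b c x a z) = P b c x z)
       \<and> has_LHS_AB_C (initial_assemblage \<sigma>)
       \<and> has_LHV_AB_C (initial_behavior P)"
proof (intro conjI allI)
  fix b x
  show "(\<Sum>a\<in>UNIV. initial_assemblage \<sigma> a b x a) = \<sigma> b x"
    unfolding sum_bool initial_assemblage_def xor2_def by (simp add: op_scale_def fun_eq_iff)
next
  fix b c x z
  show "(\<Sum>a\<in>UNIV. initial_behavior P a b c x a z) = P b c x z"
    unfolding sum_bool initial_behavior_def xor2_def by simp
next
  show "has_LHS_AB_C (initial_assemblage \<sigma>)" by (rule LHS_part[OF assms(1)])
  show "has_LHV_AB_C (initial_behavior P)" by (rule LHV_part[OF assms(2)])
qed

end
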